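(* Fix a training step $t$ and an unlabeled mini-batch $x_1^u,\dots,x_{B^u}^u$. Assume: (i) the gradient $\nabla_\theta G$ of the labeled loss $G$ is Lipschitz-continuous with Lipschitz constant $L_0$; (ii) $\|J_\theta f(x_i^u;\theta)\|\le M$ for every unlabeled example $x_i^u$ and every $\theta$. View the labeled loss after the inner step as a function of the pseudo labels, $H(\tilde y)=G(\tilde\theta_{t+1}(\tilde y))$. Then $\nabla_{\tilde y}H$ is Lipschitz-continuous, and its Lipschitz constant $L_t$ satisfies $L_t\le 4\alpha_t^2M^2L_0$. That is, $$\|\nabla_{\tilde y}H(\tilde y^1)-\nabla_{\tilde y}H(\tilde y^2)\|\le 4\alpha_t^2M^2L_0\,\|\tilde y^1-\tilde y^2\|\quad\text{for all }\tilde y^1,\tilde y^2.$$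
   Context: **Model and data.** Let $f(x;\theta)\in\mathbb{R}^C$ be a classifier, continuously differentiable in the parameter $\theta\in\mathbb{R}^d$. The labeled data are $\{(x_k^l,y_k)\}_{k=1}^{N^l}$ and the unlabeled data are $\mathcal D^u=\{x_i^u\}_{i=1}^{N^u}$. Write $J_\theta f(x;\theta)\in\mathbb{R}^{C\times d}$ for the Jacobian of $f$ in $\theta$, with $\|\cdot\|$ the operator norm. **Losses.** The loss of a pair is $\mathcal L(x,y;\theta)=\|f(x;\theta)-y\|_2^2$ (squared error). The labeled loss over the full labeled set is $$G(\theta)=\frac{1}{N^l}\sum_{k=1}^{N^l}\mathcal L(x_k^l,y_k;\theta).$$ **One inner step.** At step $t$ the current parameter is $\theta_t$, the learning rate is $\alpha_t>0$, and an unlabeled mini-batch $x_1^u,\dots,x_{B^u}^u$ is chosen. For pseudo labels $\tilde y=(\tilde y_1,\dots,\tilde y_{B^u})\in(\mathbb{R}^C)^{B^u}$, regarded as a single vector, define the one-step updated parameter $$\tilde\theta_{t+1}(\tilde y)=\theta_t-\frac{\alpha_t}{B^u}\sum_{i=1}^{B^u}\nabla_\theta\mathcal L(x_i^u,\tilde y_i;\theta_t).$$ *)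

theory Defs
  imports "HOL-Analysis.Analysis"
begin

definition grad :: "('a::real_inner \<Rightarrow> real) \<Rightarrow> 'a \<Rightarrow> 'a" where
  "grad F x = (THE g. (F has_derivative (\<lambda>h. g \<bullet> h)) (at x))"

definition sq_loss :: "('x \<Rightarrow> real^'d \<Rightarrow> real^'c) \<Rightarrow> 'x \<Rightarrow> real^'c \<Rightarrow> real^'d \<Rightarrow> real" where
  "sq_loss f x y \<theta> = (norm (f x \<theta> - y))\<^sup>2"

definition labeled_loss :: "('x \<Rightarrow> real^'d \<Rightarrow> real^'c) \<Rightarrow> nat \<Rightarrow> (nat \<Rightarrow> 'x) \<Rightarrow> (nat \<Rightarrow> real^'c)
    \<Rightarrow> real^'d \<Rightarrow> real" where
  "labeled_loss f Nl xl yl \<theta> = (1 / real Nl) * (\<Sum>k<Nl. sq_loss f (xl k) (yl k) \<theta>)"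

text \<open>One inner step; the mini-batch is indexed by the finite type 'b, so B^u = CARD('b);
  pseudo labels are one vector in (R^C)^(B^u).\<close>
definition inner_step :: "('x \<Rightarrow> real^'d \<Rightarrow> real^'c) \<Rightarrow> real \<Rightarrow> real^'d \<Rightarrow> ('b::finite \<Rightarrow> 'x)
    \<Rightarrow> real^'c^'b \<Rightarrow> real^'d" where
  "inner_step f \<alpha> \<theta>t xu ty = \<theta>t - (\<alpha> / real CARD('b)) *\<^sub>R
      (\<Sum>i\<in>UNIV. grad (\<lambda>\<theta>. sq_loss f (xu i) (ty $ i) \<theta>) \<theta>t)"

end

theory Submission imports Defs begin

lemma grad_eqI:
  fixes F :: "'a::real_inner \<Rightarrow> real"
  assumes "(F has_derivative (\<lambda>h. g \<bullet> h)) (at x)"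
  shows "grad F x = g"
  unfolding grad_def
proof (rule the_equality)
  show "(F has_derivative (\<lambda>h. g \<bullet> h)) (at x)" by (rule assms)
next
  fix g' assume "(F has_derivative (\<lambda>h. g' \<bullet> h)) (at x)"
  from has_derivative_unique[OF this assms]
  have "(g' - g) \<bullet> (g' - g) = 0" by (metis inner_diff_left right_minus_eq)
  then show "g' = g" by simp
qed

lemma adj_bound:
  fixes A :: "'n::euclidean_space \<Rightarrow> 'm::euclidean_space"
  assumes lin: "linear A" and K0: "K \<ge> 0" and K: "\<And>x. norm (A x) \<le> K * norm x"
  shows "norm (adjoint A z) \<le> K * norm z"
proof -
  let ?w = "adjoint A z"
  have "norm ?w ^ 2 = A ?w \<bullet> z" by (simp add: adjoint_works[OF lin] power2_norm_eq_inner)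
  also have "\<dots> \<le> norm (A ?w) * norm z" by (rule norm_cauchy_schwarz)
  also have "\<dots> \<le> K * norm ?w * norm z" by (simp add: K mult_right_mono)
  finally have *: "norm ?w * norm ?w \<le> (K * norm z) * norm ?w" by (simp add: power2_eq_square algebra_simps)
  show ?thesis
  proof (cases "norm ?w = 0")
    case True then show ?thesis using K0 by simp
  next
    case False then have "norm ?w > 0" by simp
    then show ?thesis using * by (simp add: mult_le_cancel_right_pos)
  qed
qed

lemma sq_loss_deriv:
  fixes f :: "'x \<Rightarrow> real^'d \<Rightarrow> real^'c"
  assumes "(f x has_derivative blinfun_apply J) (at \<theta>)"
  shows "(sq_loss f x y has_derivative (\<lambda>h. (2 *\<^sub>R adjoint (blinfun_apply J) (f x \<theta> - y)) \<bullet> h)) (at \<theta>)"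
proof -
  have lin: "linear (blinfun_apply J)" by (simp add: blinfun.bounded_linear_right bounded_linear.linear)
  have "((\<lambda>\<theta>. (f x \<theta> - y) \<bullet> (f x \<theta> - y)) has_derivative
     (\<lambda>h. (f x \<theta> - y) \<bullet> (J h - 0) + (J h - 0) \<bullet> (f x \<theta> - y))) (at \<theta>)"
    by (intro has_derivative_inner has_derivative_diff assms has_derivative_const)
  moreover have "(\<lambda>\<theta>. (f x \<theta> - y) \<bullet> (f x \<theta> - y)) = sq_loss f x y"
    by (auto simp: sq_loss_def power2_norm_eq_inner)
  moreover have "(\<lambda>h. (f x \<theta> - y) \<bullet> (J h - 0) + (J h - 0) \<bullet> (f x \<theta> - y)) =
     (\<lambda>h. (2 *\<^sub>R adjoint (blinfun_apply J) (f x \<theta> - y)) \<bullet> h)"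
    by (auto simp: adjoint_clauses[OF lin] inner_commute)
  ultimately show ?thesis by simp
qed

theorem lemma1:
  fixes f :: "'x \<Rightarrow> real^'d \<Rightarrow> real^'c"
    and Jf :: "'x \<Rightarrow> real^'d \<Rightarrow> ((real^'d) \<Rightarrow>\<^sub>L (real^'c))"
    and Nl :: nat and xl :: "nat \<Rightarrow> 'x" and yl :: "nat \<Rightarrow> real^'c"
    and xu :: "'b::finite \<Rightarrow> 'x"
    and \<theta>t :: "real^'d"
    and \<alpha> L0 M :: real
  assumes deriv: "\<And>x \<theta>. (f x has_derivative blinfun_apply (Jf x \<theta>)) (at \<theta>)"
    and cont_deriv: "\<And>x. continuous_on UNIV (Jf x)"
    and alpha_pos: "\<alpha> > 0"
    and lip_G: "\<And>\<theta>1 \<theta>2. norm (grad (labeled_loss f Nl xl yl) \<theta>1 - grad (labeled_loss f Nl xl yl) \<theta>2)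
                        \<le> L0 * norm (\<theta>1 - \<theta>2)"
    and jac_bound: "\<And>i \<theta>. norm (Jf (xu i) \<theta>) \<le> M"
  shows "(\<forall>ty. ((\<lambda>y. labeled_loss f Nl xl yl (inner_step f \<alpha> \<theta>t xu y)) has_derivative
              (\<lambda>h. grad (\<lambda>y. labeled_loss f Nl xl yl (inner_step f \<alpha> \<theta>t xu y)) ty \<bullet> h)) (at ty))
       \<and> (\<forall>ty1 ty2.
           norm (grad (\<lambda>y. labeled_loss f Nl xl yl (inner_step f \<alpha> \<theta>t xu y)) ty1
               - grad (\<lambda>y. labeled_loss f Nl xl yl (inner_step f \<alpha> \<theta>t xu y)) ty2)
           \<le> 4 * \<alpha>\<^sup>2 * M\<^sup>2 * L0 * norm (ty1 - ty2))"
proof -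
  let ?G = "labeled_loss f Nl xl yl"
  let ?B = "real CARD('b)"
  define J where "J i = blinfun_apply (Jf (xu i) \<theta>t)" for i
  define gG where "gG \<theta> = (1 / real Nl) *\<^sub>R (\<Sum>k<Nl. 2 *\<^sub>R adjoint (blinfun_apply (Jf (xl k) \<theta>)) (f (xl k) \<theta> - yl k))" for \<theta>
  define A where "A y = (\<alpha> / ?B) *\<^sub>R (\<Sum>i\<in>UNIV. 2 *\<^sub>R adjoint (J i) (y $ i))" for y :: "real^'c^'b"
  define c where "c = \<theta>t - (\<alpha> / ?B) *\<^sub>R (\<Sum>i\<in>UNIV. 2 *\<^sub>R adjoint (J i) (f (xu i) \<theta>t))"
  define K where "K = 2 * \<alpha> * M"
  have linB: "linear (blinfun_apply X)" for X :: "(real^'d) \<Rightarrow>\<^sub>L (real^'c)"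
    by (simp add: blinfun.bounded_linear_right bounded_linear.linear)
  have linJ: "linear (J i)" for i unfolding J_def by (rule linB)
  have M0: "M \<ge> 0" using jac_bound[of undefined \<theta>t] norm_ge_zero[of "Jf (xu undefined) \<theta>t"] by linarith
  have L00: "L0 \<ge> 0"
  proof -
    obtain i :: 'd where True by simp
    have "0 \<le> norm (grad ?G 0 - grad ?G (axis i 1))" by simp
    also have "\<dots> \<le> L0 * norm (0 - axis i (1::real))" by (rule lip_G)
    finally show ?thesis by simp
  qed
  have K0: "K \<ge> 0" unfolding K_def using alpha_pos M0 by simp
  have G_deriv: "(?G has_derivative (\<lambda>h. gG \<theta> \<bullet> h)) (at \<theta>)" for \<theta>
  proof -
    have "((\<lambda>\<theta>. (1 / real Nl) * (\<Sum>k<Nl. sq_loss f (xl k) (yl k) \<theta>)) has_derivative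
      (\<lambda>h. (1 / real Nl) * (\<Sum>k<Nl. (2 *\<^sub>R adjoint (blinfun_apply (Jf (xl k) \<theta>)) (f (xl k) \<theta> - yl k)) \<bullet> h))) (at \<theta>)"
      by (intro has_derivative_mult_right has_derivative_sum sq_loss_deriv deriv)
    moreover have "(\<lambda>\<theta>. (1 / real Nl) * (\<Sum>k<Nl. sq_loss f (xl k) (yl k) \<theta>)) = ?G"
      by (auto simp: labeled_loss_def)
    moreover have "(\<lambda>h. (1 / real Nl) * (\<Sum>k<Nl. (2 *\<^sub>R adjoint (blinfun_apply (Jf (xl k) \<theta>)) (f (xl k) \<theta> - yl k)) \<bullet> h)) = (\<lambda>h. gG \<theta> \<bullet> h)"
      by (auto simp: gG_def inner_sum_left)
    ultimately show ?thesis by simp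
  qed
  have gradG: "grad ?G \<theta> = gG \<theta>" for \<theta> by (rule grad_eqI[OF G_deriv])
  have lipg: "norm (gG p - gG q) \<le> L0 * norm (p - q)" for p q using lip_G[of p q] by (simp add: gradG)
  have step: "inner_step f \<alpha> \<theta>t xu y = c + A y" for y
  proof -
    have g: "grad (\<lambda>\<theta>. sq_loss f (xu i) (y $ i) \<theta>) \<theta>t = 2 *\<^sub>R adjoint (J i) (f (xu i) \<theta>t - y $ i)" for i
      unfolding J_def by (rule grad_eqI) (use sq_loss_deriv[OF deriv] in simp)
    have d: "adjoint (J i) (f (xu i) \<theta>t - y $ i) = adjoint (J i) (f (xu i) \<theta>t) - adjoint (J i) (y $ i)" for i
      by (rule linear_diff[OF adjoint_linear[OF linJ]])
    show ?thesis
      unfolding inner_step_def g d c_def A_def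
      by (simp add: scaleR_diff_right sum_subtractf algebra_simps)
  qed
  have linA: "linear A"
  proof (rule linearI)
    fix x y :: "real^'c^'b"
    show "A (x + y) = A x + A y"
      unfolding A_def by (simp add: linear_add[OF adjoint_linear[OF linJ]] sum.distrib scaleR_add_right)
  next
    fix r :: real and x :: "real^'c^'b"
    show "A (r *\<^sub>R x) = r *\<^sub>R A x"
      unfolding A_def by (simp add: linear_scale[OF adjoint_linear[OF linJ]] scaleR_sum_right mult.commute mult.left_commute)
  qed
  have adjJ: "norm (adjoint (J i) v) \<le> M * norm v" for i v
    proof (rule adj_bound[OF linJ M0])
    fix x
    have "norm (J i x) \<le> norm (Jf (xu i) \<theta>t) * norm x" unfolding J_def by (rule norm_blinfun)
    also have "\<dots> \<le> M * norm x" by (rule mult_right_mono[OF jac_bound norm_ge_zero])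
    finally show "norm (J i x) \<le> M * norm x" .
  qed
  have Abound: "norm (A y) \<le> K * norm y" for y
  proof -
    have "norm (\<Sum>i\<in>UNIV. 2 *\<^sub>R adjoint (J i) (y $ i)) \<le> (\<Sum>i\<in>(UNIV::'b set). 2 * (M * norm y))"
    proof (rule order.trans[OF norm_sum sum_mono])
      fix i
      have "norm (adjoint (J i) (y $ i)) \<le> M * norm y"
        using adjJ[of i "y $ i"] Finite_Cartesian_Product.norm_nth_le[of y i] M0 by (meson mult_left_mono order.trans)
      then show "norm (2 *\<^sub>R adjoint (J i) (y $ i)) \<le> 2 * (M * norm y)" by simp
    qed
    also have "\<dots> = ?B * (2 * M * norm y)" by simp
    finally have *: "norm (\<Sum>i\<in>UNIV. 2 *\<^sub>R adjoint (J i) (y $ i)) \<le> ?B * (2 * M * norm y)" .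
    have "norm (A y) = (\<alpha> / ?B) * norm (\<Sum>i\<in>UNIV. 2 *\<^sub>R adjoint (J i) (y $ i))"
      unfolding A_def using alpha_pos by simp
    also have "\<dots> \<le> (\<alpha> / ?B) * (?B * (2 * M * norm y))"
      by (rule mult_left_mono[OF *]) (use alpha_pos in simp)
    also have "\<dots> = K * norm y" unfolding K_def by simp
    finally show ?thesis .
  qed
  have Hfun: "(\<lambda>y. ?G (inner_step f \<alpha> \<theta>t xu y)) = ?G \<circ> (\<lambda>y. c + A y)"
    by (auto simp: step)
  have H_deriv: "((\<lambda>y. ?G (inner_step f \<alpha> \<theta>t xu y)) has_derivative
      (\<lambda>h. adjoint A (gG (c + A y)) \<bullet> h)) (at y)" for y
  proof -
    have "((\<lambda>y. c + A y) has_derivative (\<lambda>h. 0 + A h)) (at y)"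
      by (intro has_derivative_add has_derivative_const linear_imp_has_derivative linA)
    then have "((\<lambda>y. c + A y) has_derivative A) (at y)" by simp
    from diff_chain_at[OF this G_deriv]
    have "(?G \<circ> (\<lambda>y. c + A y) has_derivative (\<lambda>h. gG (c + A y) \<bullet> h) \<circ> A) (at y)" .
    moreover have "(\<lambda>h. gG (c + A y) \<bullet> h) \<circ> A = (\<lambda>h. adjoint A (gG (c + A y)) \<bullet> h)"
      by (auto simp: adjoint_clauses[OF linA] inner_commute)
    ultimately show ?thesis by (simp add: Hfun)
  qed
  have gradH: "grad (\<lambda>y. ?G (inner_step f \<alpha> \<theta>t xu y)) y = adjoint A (gG (c + A y))" for y
    by (rule grad_eqI[OF H_deriv])
  show ?thesis
  proof (intro conjI allI)
    fix ty show "((\<lambda>y. ?G (inner_step f \<alpha> \<theta>t xu y)) has_derivative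
              (\<lambda>h. grad (\<lambda>y. ?G (inner_step f \<alpha> \<theta>t xu y)) ty \<bullet> h)) (at ty)"
      unfolding gradH by (rule H_deriv)
  next
    fix ty1 ty2 :: "real^'c^'b"
    have "norm (adjoint A (gG (c + A ty1)) - adjoint A (gG (c + A ty2)))
        = norm (adjoint A (gG (c + A ty1) - gG (c + A ty2)))"
      by (simp add: linear_diff[OF adjoint_linear[OF linA]])
    also have "\<dots> \<le> K * norm (gG (c + A ty1) - gG (c + A ty2))"
      by (rule adj_bound[OF linA K0 Abound])
    also have "\<dots> \<le> K * (L0 * norm (A (ty1 - ty2)))"
      using lipg[of "c + A ty1" "c + A ty2"] K0
      by (simp add: linear_diff[OF linA] mult_left_mono)
    also have "\<dots> \<le> K * (L0 * (K * norm (ty1 - ty2)))"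
      by (intro mult_left_mono Abound K0 L00)
    also have "\<dots> = 4 * \<alpha>\<^sup>2 * M\<^sup>2 * L0 * norm (ty1 - ty2)"
      unfolding K_def by (simp add: power2_eq_square)
    finally show "norm (grad (\<lambda>y. ?G (inner_step f \<alpha> \<theta>t xu y)) ty1
               - grad (\<lambda>y. ?G (inner_step f \<alpha> \<theta>t xu y)) ty2)
           \<le> 4 * \<alpha>\<^sup>2 * M\<^sup>2 * L0 * norm (ty1 - ty2)" unfolding gradH .
  qed
qed

end
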